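(* For every integer $n\ge 3$, the crown graph $K_{n,n}\setminus M$, where $M$ is a perfect matching, is a distance-transitive graph of diameter $3$ with intersection array $\{n-1,n-2,1;1,n-2,n-1\}$. Coloring each pair of distinct vertices by $b$, $a$, $c$ according as their distance is $1$, $2$, $3$ yields a representation of the relation algebra $26_{65}$ on $2n$ vertices, and this representation is algebraic.
   Context: A connected graph is distance-transitive if whenever $\operatorname{dist}(x,y)=\operatorname{dist}(u,v)$ some automorphism maps $x\mapsto u$, $y\mapsto v$. A distance-regular graph of diameter $3$ has intersection array $\{b_0,b_1,b_2;c_1,c_2,c_3\}$ where, for $\operatorname{dist}(x,y)=i$, $b_i$ (resp. $c_i$) is the number of neighbours of $y$ at distance $i+1$ (resp. $i-1$) from $x$. A cycle type is the multiset of colors of the sides of a triangle, e.g. $abb$ = one side $a$, two sides $b$. $26_{65}$ is the finite symmetric integral relation algebra with atoms $1',a,b,c$ whose mandatory diversity cycle types are exactly $aaa, abb, abc$ (all of $bbb,ccc,baa,acc,caa,bcc,cbb$ forbidden). A representation on a set $X$ is a coloring of all 2-element subsets of $X$ by $a,b,c$, each color used, such that: for every mandatory type $\{h,i,j\}$, every edge $\{x,y\}$ colored $h$ (for each choice of $h$ among the type's colors) and each ordering $(i,j)$ of the remaining two colors, some $z$ has $\{x,z\}$ colored $i$, $\{z,y\}$ colored $j$; and no triangle of a forbidden type occurs. A representation on a finite set is algebraic if each color class (viewed as a set of ordered pairs, together with the diagonal as the identity class) is a single orbit on ordered pairs of the group of color-preserving permutations of $X$. *)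

theory Defs
  imports Main "HOL-Library.Multiset"
begin

fun walk :: "'v set \<Rightarrow> ('v \<Rightarrow> 'v \<Rightarrow> bool) \<Rightarrow> nat \<Rightarrow> 'v \<Rightarrow> 'v \<Rightarrow> bool" where
  "walk V adj 0 x y = (x = y)"
| "walk V adj (Suc k) x y = (\<exists>z\<in>V. adj x z \<and> walk V adj k z y)"

definition connected_graph :: "'v set \<Rightarrow> ('v \<Rightarrow> 'v \<Rightarrow> bool) \<Rightarrow> bool" where
  "connected_graph V adj \<longleftrightarrow> (\<forall>x\<in>V. \<forall>y\<in>V. \<exists>k. walk V adj k x y)"

definition gdist :: "'v set \<Rightarrow> ('v \<Rightarrow> 'v \<Rightarrow> bool) \<Rightarrow> 'v \<Rightarrow> 'v \<Rightarrow> nat" where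
  "gdist V adj x y = (LEAST k. walk V adj k x y)"

definition has_diameter :: "'v set \<Rightarrow> ('v \<Rightarrow> 'v \<Rightarrow> bool) \<Rightarrow> nat \<Rightarrow> bool" where
  "has_diameter V adj d \<longleftrightarrow> connected_graph V adj \<and>
     (\<forall>x\<in>V. \<forall>y\<in>V. gdist V adj x y \<le> d) \<and> (\<exists>x\<in>V. \<exists>y\<in>V. gdist V adj x y = d)"

definition graph_automorphism :: "'v set \<Rightarrow> ('v \<Rightarrow> 'v \<Rightarrow> bool) \<Rightarrow> ('v \<Rightarrow> 'v) \<Rightarrow> bool" where
  "graph_automorphism V adj f \<longleftrightarrow> bij_betw f V V \<and>
     (\<forall>p\<in>V. \<forall>q\<in>V. adj p q \<longleftrightarrow> adj (f p) (f q))"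

definition distance_transitive :: "'v set \<Rightarrow> ('v \<Rightarrow> 'v \<Rightarrow> bool) \<Rightarrow> bool" where
  "distance_transitive V adj \<longleftrightarrow> connected_graph V adj \<and>
     (\<forall>x\<in>V. \<forall>y\<in>V. \<forall>u\<in>V. \<forall>v\<in>V. gdist V adj x y = gdist V adj u v \<longrightarrow>
        (\<exists>f. graph_automorphism V adj f \<and> f x = u \<and> f y = v))"

text \<open>Distance-regular of diameter d = length bs = length cs with intersection array
  {bs!0,...,bs!(d-1); cs!0,...,cs!(d-1)} = {b_0,...,b_(d-1); c_1,...,c_d}.\<close>
definition has_intersection_array ::
  "'v set \<Rightarrow> ('v \<Rightarrow> 'v \<Rightarrow> bool) \<Rightarrow> nat list \<Rightarrow> nat list \<Rightarrow> bool" where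
  "has_intersection_array V adj bs cs \<longleftrightarrow>
     length bs = length cs \<and> has_diameter V adj (length bs) \<and>
     (\<forall>x\<in>V. \<forall>y\<in>V. \<forall>i<length bs. gdist V adj x y = i \<longrightarrow>
        card {z\<in>V. adj y z \<and> gdist V adj x z = i + 1} = bs ! i) \<and>
     (\<forall>x\<in>V. \<forall>y\<in>V. \<forall>i. 1 \<le> i \<and> i \<le> length cs \<longrightarrow> gdist V adj x y = i \<longrightarrow>
        card {z\<in>V. adj y z \<and> gdist V adj x z = i - 1} = cs ! (i - 1))"

datatype color = ColA | ColB | ColC

definition mandatory_26_65 :: "color multiset set" where
  "mandatory_26_65 = {{#ColA, ColA, ColA#}, {#ColA, ColB, ColB#}, {#ColA, ColB, ColC#}}"

text \<open>A representation on X: col colours 2-element subsets (so it is symmetric on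
  distinct pairs; its values on the diagonal are irrelevant).\<close>
definition representation_26_65 :: "'v set \<Rightarrow> ('v \<Rightarrow> 'v \<Rightarrow> color) \<Rightarrow> bool" where
  "representation_26_65 X col \<longleftrightarrow>
     (\<forall>x\<in>X. \<forall>y\<in>X. x \<noteq> y \<longrightarrow> col x y = col y x) \<and>
     (\<forall>h. \<exists>x\<in>X. \<exists>y\<in>X. x \<noteq> y \<and> col x y = h) \<and>
     (\<forall>T\<in>mandatory_26_65. \<forall>x\<in>X. \<forall>y\<in>X. \<forall>i j. x \<noteq> y \<and> {#col x y, i, j#} = T \<longrightarrow>
        (\<exists>z\<in>X. z \<noteq> x \<and> z \<noteq> y \<and> col x z = i \<and> col z y = j)) \<and>
     (\<forall>x\<in>X. \<forall>y\<in>X. \<forall>z\<in>X. x \<noteq> y \<and> y \<noteq> z \<and> x \<noteq> z \<longrightarrow>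
        {#col x y, col y z, col x z#} \<in> mandatory_26_65)"

definition color_preserving_perms :: "'v set \<Rightarrow> ('v \<Rightarrow> 'v \<Rightarrow> color) \<Rightarrow> ('v \<Rightarrow> 'v) set" where
  "color_preserving_perms X col =
     {f. bij_betw f X X \<and> (\<forall>x\<in>X. \<forall>y\<in>X. x \<noteq> y \<longrightarrow> col (f x) (f y) = col x y)}"

definition pair_orbit :: "('v \<Rightarrow> 'v) set \<Rightarrow> 'v \<times> 'v \<Rightarrow> ('v \<times> 'v) set" where
  "pair_orbit G p = {(f (fst p), f (snd p)) | f. f \<in> G}"

definition color_class :: "'v set \<Rightarrow> ('v \<Rightarrow> 'v \<Rightarrow> color) \<Rightarrow> color \<Rightarrow> ('v \<times> 'v) set" where
  "color_class X col h = {(x, y). x \<in> X \<and> y \<in> X \<and> x \<noteq> y \<and> col x y = h}"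

definition algebraic_representation :: "'v set \<Rightarrow> ('v \<Rightarrow> 'v \<Rightarrow> color) \<Rightarrow> bool" where
  "algebraic_representation X col \<longleftrightarrow> finite X \<and>
     (\<forall>R \<in> {Id_on X} \<union> range (color_class X col).
        \<exists>p\<in>R. R = pair_orbit (color_preserving_perms X col) p)"

text \<open>Vertices (i, s) with i < n and s a side; the removed matching is {(i,False),(i,True)}.\<close>
definition crown_vertices :: "nat \<Rightarrow> (nat \<times> bool) set" where
  "crown_vertices n = {0..<n} \<times> (UNIV :: bool set)"

definition crown_adj :: "nat \<times> bool \<Rightarrow> nat \<times> bool \<Rightarrow> bool" where
  "crown_adj p q \<longleftrightarrow> snd p \<noteq> snd q \<and> fst p \<noteq> fst q"

definition crown_coloring :: "nat \<Rightarrow> nat \<times> bool \<Rightarrow> nat \<times> bool \<Rightarrow> color" where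
  "crown_coloring n p q =
     (let d = gdist (crown_vertices n) crown_adj p q in
      if d = 1 then ColB else if d = 2 then ColA else ColC)"

end

theory Submission
  imports Defs
begin

definition sw :: "nat \<Rightarrow> nat \<Rightarrow> nat \<Rightarrow> nat" where
  "sw a b i = (if i = a then b else if i = b then a else i)"

lemma sw_bij: "a < n \<Longrightarrow> b < n \<Longrightarrow> bij_betw (sw a b) {0..<n} {0..<n}"
  unfolding bij_betw_def inj_on_def sw_def
  apply (intro conjI)
   apply (auto split: if_splits)[1]
  apply (auto simp: image_def split: if_splits)
  done

lemma perm2:
  fixes a b c d n :: nat
  assumes "a < n" "b < n" "c < n" "d < n" "a = b \<longleftrightarrow> c = d"
  shows "\<exists>\<sigma>. bij_betw \<sigma> {0..<n} {0..<n} \<and> \<sigma> a = c \<and> \<sigma> b = d"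
proof -
  let ?s1 = "sw a c"
  let ?s2 = "sw (?s1 b) d"
  have b1: "?s1 b < n" using assms by (auto simp: sw_def)
  have "bij_betw (?s2 \<circ> ?s1) {0..<n} {0..<n}"
    using sw_bij[OF assms(1,3)] sw_bij[OF b1 assms(4)] by (rule bij_betw_trans)
  moreover have "(?s2 \<circ> ?s1) a = c" "(?s2 \<circ> ?s1) b = d"
    using assms by (auto simp: sw_def)
  ultimately show ?thesis by blast
qed

lemma third: "\<exists>k<n. k \<noteq> a \<and> k \<noteq> b" if "3 \<le> (n::nat)"
proof -
  have "(0::nat) < n" "(1::nat) < n" "(2::nat) < n" using that by auto
  then show ?thesis by (metis One_nat_def Suc_1 n_not_Suc_n zero_neq_numeral)
qed

lemma walk_step: "z \<in> V \<Longrightarrow> adj x z \<Longrightarrow> walk V adj k z y \<Longrightarrow> walk V adj (Suc k) x y"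
  by auto

lemma walk_parity: "walk V crown_adj k x y \<Longrightarrow> (snd x = snd y \<longleftrightarrow> even k)"
  by (induction k arbitrary: x) (auto simp: crown_adj_def)

definition dd :: "nat \<times> bool \<Rightarrow> nat \<times> bool \<Rightarrow> nat" where
  "dd x y = (if x = y then 0 else if snd x \<noteq> snd y then (if fst x \<noteq> fst y then 1 else 3) else 2)"

lemma mem_V: "x \<in> crown_vertices n \<longleftrightarrow> fst x < n"
  by (cases x) (auto simp: crown_vertices_def)

lemma walk_dd:
  assumes "3 \<le> n" "x \<in> crown_vertices n" "y \<in> crown_vertices n"
  shows "walk (crown_vertices n) crown_adj (dd x y) x y"
proof -
  obtain a s b t where x: "x = (a,s)" and y: "y = (b,t)" by (cases x, cases y)
  have ab: "a < n" "b < n" using assms x y by (auto simp: mem_V)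
  obtain k where k: "k < n" "k \<noteq> a" "k \<noteq> b" using third[OF assms(1)] by blast
  show ?thesis
  proof (cases "x = y")
    case True then show ?thesis by (simp add: dd_def)
  next
    case False
    show ?thesis
    proof (cases "s = t")
      case True
      then have "a \<noteq> b" using False x y by auto
      then show ?thesis using True x y ab k
        by (auto simp: dd_def crown_adj_def mem_V numeral_2_eq_2 intro!: bexI[of _ "(k, \<not> s)"])
    next
      case st: False
      show ?thesis
      proof (cases "a = b")
        case True
        obtain j where j: "j < n" "j \<noteq> a" using k by blast
        obtain m where m: "m < n" "m \<noteq> a" "m \<noteq> j" using third[OF assms(1)] by blast
        have "walk (crown_vertices n) crown_adj 3 (a,s) (a,t)"
          unfolding numeral_3_eq_3
          apply (rule walk_step[of "(j,t)"])
          using j m st ab apply (auto simp: crown_adj_def mem_V)[2]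
          apply (rule walk_step[of "(m,s)"])
          using j m st ab apply (auto simp: crown_adj_def mem_V)[2]
          apply (rule walk_step[of "(a,t)"])
          using j m st ab by (auto simp: crown_adj_def mem_V)
        then show ?thesis using True x y st by (simp add: dd_def)
      next
        case False
        then show ?thesis using st x y ab by (auto simp: dd_def crown_adj_def mem_V)
      qed
    qed
  qed
qed

lemma gdist_eq:
  assumes "3 \<le> n" "x \<in> crown_vertices n" "y \<in> crown_vertices n"
  shows "gdist (crown_vertices n) crown_adj x y = dd x y"
  unfolding gdist_def
proof (rule Least_equality)
  show "walk (crown_vertices n) crown_adj (dd x y) x y" by (rule walk_dd[OF assms])
next
  fix k assume w: "walk (crown_vertices n) crown_adj k x y"
  show "dd x y \<le> k"
  proof (rule ccontr)
    assume "\<not> dd x y \<le> k"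
    then have lt: "k < dd x y" by simp
    have p: "snd x = snd y \<longleftrightarrow> even k" by (rule walk_parity[OF w])
    have "dd x y \<le> 3" by (simp add: dd_def)
    then have "k < 3" using lt by linarith
    then consider "k = 0" | "k = 1" | "k = 2" by linarith
    then show False
    proof cases
      case 1 then show False using w lt by (auto simp: dd_def)
    next
      case 2 then show False using w lt p by (auto simp: dd_def crown_adj_def split: if_splits)
    next
      case 3 then show False using w lt p by (auto simp: dd_def crown_adj_def split: if_splits)
    qed
  qed
qed


definition colp :: "nat \<times> bool \<Rightarrow> nat \<times> bool \<Rightarrow> color" where
  "colp x y = (if snd x = snd y then ColA else if fst x = fst y then ColC else ColB)"

lemma col_eq:
  assumes "3 \<le> n" "x \<in> crown_vertices n" "y \<in> crown_vertices n" "x \<noteq> y"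
  shows "crown_coloring n x y = colp x y"
  using assms by (auto simp: crown_coloring_def gdist_eq dd_def colp_def Let_def)

lemma mand_iff: "{#h,i,j#} \<in> mandatory_26_65 \<longleftrightarrow>
  (h,i,j) \<in> {(ColA,ColA,ColA),(ColA,ColB,ColB),(ColB,ColA,ColB),(ColB,ColB,ColA),
    (ColA,ColB,ColC),(ColA,ColC,ColB),(ColB,ColA,ColC),(ColB,ColC,ColA),(ColC,ColA,ColB),(ColC,ColB,ColA)}"
  by (cases h; cases i; cases j) (simp_all add: mandatory_26_65_def add_eq_conv_diff)

definition fm :: "(nat \<Rightarrow> nat) \<Rightarrow> bool \<Rightarrow> nat \<times> bool \<Rightarrow> nat \<times> bool" where
  "fm \<sigma> t p = (\<sigma> (fst p), snd p \<noteq> t)"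

lemma fm_bij:
  assumes "bij_betw \<sigma> {0..<n} {0..<n}"
  shows "bij_betw (fm \<sigma> t) (crown_vertices n) (crown_vertices n)"
  unfolding bij_betw_def
proof
  have inj: "inj_on \<sigma> {0..<n}" and im: "\<sigma> ` {0..<n} = {0..<n}" using assms by (auto simp: bij_betw_def)
  show "inj_on (fm \<sigma> t) (crown_vertices n)"
    using inj by (auto simp: inj_on_def fm_def mem_V)
  show "fm \<sigma> t ` crown_vertices n = crown_vertices n"
  proof
    show "fm \<sigma> t ` crown_vertices n \<subseteq> crown_vertices n"
      using im by (auto simp: fm_def mem_V)
  next
    show "crown_vertices n \<subseteq> fm \<sigma> t ` crown_vertices n"
    proof
      fix p assume p: "p \<in> crown_vertices n"
      obtain i s where ps: "p = (i, s)" by (cases p)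
      have "i \<in> \<sigma> ` {0..<n}" using p ps im by (auto simp: mem_V)
      then obtain j where j: "j < n" "\<sigma> j = i" by auto
      have "p = fm \<sigma> t (j, s \<noteq> t)" using ps j by (auto simp: fm_def)
      moreover have "(j, s \<noteq> t) \<in> crown_vertices n" using j by (simp add: mem_V)
      ultimately show "p \<in> fm \<sigma> t ` crown_vertices n" by blast
    qed
  qed
qed

lemma fm_pat:
  assumes "bij_betw \<sigma> {0..<n} {0..<n}" "p \<in> crown_vertices n" "q \<in> crown_vertices n"
  shows "(fst (fm \<sigma> t p) = fst (fm \<sigma> t q) \<longleftrightarrow> fst p = fst q)"
    "(snd (fm \<sigma> t p) = snd (fm \<sigma> t q) \<longleftrightarrow> snd p = snd q)"
    "(fm \<sigma> t p = fm \<sigma> t q \<longleftrightarrow> p = q)"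
  using assms by (auto simp: fm_def mem_V bij_betw_def inj_on_def prod_eq_iff)

lemma transit:
  assumes "x \<in> crown_vertices n" "y \<in> crown_vertices n" "u \<in> crown_vertices n" "v \<in> crown_vertices n"
    "snd x = snd y \<longleftrightarrow> snd u = snd v" "fst x = fst y \<longleftrightarrow> fst u = fst v"
  shows "\<exists>\<sigma> t. bij_betw \<sigma> {0..<n} {0..<n} \<and> fm \<sigma> t x = u \<and> fm \<sigma> t y = v"
proof -
  obtain \<sigma> where s: "bij_betw \<sigma> {0..<n} {0..<n}" "\<sigma> (fst x) = fst u" "\<sigma> (fst y) = fst v"
    using perm2[of "fst x" n "fst y" "fst u" "fst v"] assms by (auto simp: mem_V)
  have "fm \<sigma> (snd x \<noteq> snd u) x = u" "fm \<sigma> (snd x \<noteq> snd u) y = v"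
    using s assms(5) by (auto simp: fm_def prod_eq_iff)
  then show ?thesis using s by blast
qed

lemma dd_pat: "dd x y = dd u v \<Longrightarrow> (snd x = snd y \<longleftrightarrow> snd u = snd v) \<and> (fst x = fst y \<longleftrightarrow> fst u = fst v)"
  by (auto simp: dd_def prod_eq_iff split: if_splits)

lemma colp_pat: "x \<noteq> y \<Longrightarrow> u \<noteq> v \<Longrightarrow> colp x y = colp u v \<Longrightarrow>
   (snd x = snd y \<longleftrightarrow> snd u = snd v) \<and> (fst x = fst y \<longleftrightarrow> fst u = fst v)"
  by (auto simp: colp_def prod_eq_iff split: if_splits)

lemma card_side:
  assumes "A \<subseteq> {0..<n}"
  shows "card {z \<in> crown_vertices n. snd z = t \<and> fst z \<notin> A} = n - card A"
proof -
  have "{z \<in> crown_vertices n. snd z = t \<and> fst z \<notin> A} = (\<lambda>k. (k,t)) ` ({0..<n} - A)"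
    by (auto simp: mem_V)
  moreover have "card ((\<lambda>k. (k,t)) ` ({0..<n} - A)) = card ({0..<n} - A)"
    by (rule card_image) (auto simp: inj_on_def)
  moreover have "card ({0..<n} - A) = n - card A"
    using assms by (simp add: card_Diff_subset finite_subset)
  ultimately show ?thesis by simp
qed


lemma fm_aut:
  assumes "bij_betw \<sigma> {0..<n} {0..<n}"
  shows "graph_automorphism (crown_vertices n) crown_adj (fm \<sigma> t)"
  unfolding graph_automorphism_def
  using fm_bij[OF assms] fm_pat[OF assms] by (auto simp: crown_adj_def)

lemma fm_cpp:
  assumes "3 \<le> n" "bij_betw \<sigma> {0..<n} {0..<n}"
  shows "fm \<sigma> t \<in> color_preserving_perms (crown_vertices n) (crown_coloring n)"
proof -
  have b: "bij_betw (fm \<sigma> t) (crown_vertices n) (crown_vertices n)" by (rule fm_bij[OF assms(2)])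
  have m: "\<And>x. x \<in> crown_vertices n \<Longrightarrow> fm \<sigma> t x \<in> crown_vertices n"
    using b bij_betwE by blast
  show ?thesis unfolding color_preserving_perms_def
    using b m fm_pat[OF assms(2)] col_eq[OF assms(1)] by (auto simp: colp_def)
qed

lemma part_dt:
  assumes "3 \<le> n"
  shows "distance_transitive (crown_vertices n) crown_adj"
  unfolding distance_transitive_def connected_graph_def
proof (intro conjI ballI impI)
  fix x y assume "x \<in> crown_vertices n" "y \<in> crown_vertices n"
  then show "\<exists>k. walk (crown_vertices n) crown_adj k x y" using walk_dd[OF assms] by blast
next
  fix x y u v assume V: "x \<in> crown_vertices n" "y \<in> crown_vertices n" "u \<in> crown_vertices n" "v \<in> crown_vertices n"
    and g: "gdist (crown_vertices n) crown_adj x y = gdist (crown_vertices n) crown_adj u v"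
  have "dd x y = dd u v" using g V gdist_eq[OF assms] by simp
  from dd_pat[OF this] obtain \<sigma> t where "bij_betw \<sigma> {0..<n} {0..<n}" "fm \<sigma> t x = u" "fm \<sigma> t y = v"
    using transit[OF V] by blast
  then show "\<exists>f. graph_automorphism (crown_vertices n) crown_adj f \<and> f x = u \<and> f y = v"
    using fm_aut by blast
qed

lemma part_diam:
  assumes "3 \<le> n"
  shows "has_diameter (crown_vertices n) crown_adj 3"
  unfolding has_diameter_def
proof (intro conjI)
  show "connected_graph (crown_vertices n) crown_adj"
    using part_dt[OF assms] by (simp add: distance_transitive_def)
  show "\<forall>x\<in>crown_vertices n. \<forall>y\<in>crown_vertices n. gdist (crown_vertices n) crown_adj x y \<le> 3"
    using gdist_eq[OF assms] by (auto simp: dd_def)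
  have "(0,True) \<in> crown_vertices n" "(0,False) \<in> crown_vertices n" using assms by (auto simp: mem_V)
  then show "\<exists>x\<in>crown_vertices n. \<exists>y\<in>crown_vertices n. gdist (crown_vertices n) crown_adj x y = 3"
    using gdist_eq[OF assms] by (force simp: dd_def)
qed


lemma t1: "{z \<in> crown_vertices n. crown_adj (a,s) z \<and> dd (a,s) z = 1} =
       {z \<in> crown_vertices n. snd z = (\<not> s) \<and> fst z \<notin> {a}}"
  by (auto simp: dd_def crown_adj_def)
lemma t2: assumes "a \<noteq> b" shows "{z \<in> crown_vertices n. crown_adj (b,\<not>s) z \<and> dd (a,s) z = 2} =
       {z \<in> crown_vertices n. snd z = s \<and> fst z \<notin> {a,b}}"
  using assms by (auto simp: dd_def crown_adj_def)
lemma t3: assumes "a \<noteq> b" "a < n" shows "{z \<in> crown_vertices n. crown_adj (b,s) z \<and> dd (a,s) z = 3} =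
       {(a,\<not>s)}"
  using assms by (auto simp: dd_def crown_adj_def mem_V)
lemma c1: assumes "a \<noteq> b" "a < n" shows "{z \<in> crown_vertices n. crown_adj (b,\<not>s) z \<and> dd (a,s) z = 0} =
       {(a,s)}"
  using assms by (auto simp: dd_def crown_adj_def mem_V split: if_splits)
lemma c2: assumes "a \<noteq> b" shows "{z \<in> crown_vertices n. crown_adj (b,s) z \<and> dd (a,s) z = 1} =
       {z \<in> crown_vertices n. snd z = (\<not> s) \<and> fst z \<notin> {a,b}}"
  using assms by (auto simp: dd_def crown_adj_def)
lemma c3: "{z \<in> crown_vertices n. crown_adj (a,\<not>s) z \<and> dd (a,s) z = 2} =
       {z \<in> crown_vertices n. snd z = s \<and> fst z \<notin> {a}}"
  by (auto simp: dd_def crown_adj_def)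

lemma dd_cases:
  assumes "dd (a,s) y = i"
  shows "(i = 0 \<and> y = (a,s)) \<or> (i = 1 \<and> fst y \<noteq> a \<and> y = (fst y, \<not> s))
     \<or> (i = 2 \<and> fst y \<noteq> a \<and> y = (fst y, s)) \<or> (i = 3 \<and> y = (a, \<not> s))"
  using assms by (cases y) (auto simp: dd_def split: if_splits)

lemma part_ia:
  assumes n3: "3 \<le> n"
  shows "has_intersection_array (crown_vertices n) crown_adj [n - 1, n - 2, 1] [1, n - 2, n - 1]"
  unfolding has_intersection_array_def
proof (intro conjI allI ballI impI)
  show "length [n - 1, n - 2, 1] = length [1, n - 2, n - 1]" by simp
  show "has_diameter (crown_vertices n) crown_adj (length [n - 1, n - 2, 1])"
    using part_diam[OF assms] by (simp add: numeral_3_eq_3)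
next
  fix x y i assume V: "x \<in> crown_vertices n" "y \<in> crown_vertices n"
    and i: "i < length [n - 1, n - 2, 1]" and g: "gdist (crown_vertices n) crown_adj x y = i"
  obtain a s where x: "x = (a,s)" by (cases x)
  obtain b where b: "b = fst y" by simp
  have ab: "a < n" "b < n" using V x b by (auto simp: mem_V)
  have S: "{z \<in> crown_vertices n. crown_adj y z \<and> gdist (crown_vertices n) crown_adj x z = i + 1}
     = {z \<in> crown_vertices n. crown_adj y z \<and> dd x z = i + 1}"
    using gdist_eq[OF n3 V(1)] by auto
  have d: "dd (a,s) y = i" using g gdist_eq[OF n3 V] x by simp
  have "i < 3" using i by simp
  then have "card {z \<in> crown_vertices n. crown_adj y z \<and> dd x z = i + 1} = [n - 1, n - 2, 1] ! i"
    using dd_cases[OF d]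
  proof (elim disjE conjE)
    assume "i = 0" "y = (a,s)"
    then show ?thesis using x t1[of n a s] card_side[of "{a}" n] ab by simp
  next
    assume "i = 1" "fst y \<noteq> a" "y = (fst y, \<not> s)"
    then show ?thesis using x t2[of a b n s] card_side[of "{a,b}" n s] ab b by (simp add: numeral_2_eq_2)
  next
    assume "i = 2" "fst y \<noteq> a" "y = (fst y, s)"
    then show ?thesis using x t3[of a b n s] ab b by (simp add: numeral_2_eq_2 numeral_3_eq_3)
  qed auto
  then show "card {z \<in> crown_vertices n. crown_adj y z \<and> gdist (crown_vertices n) crown_adj x z = i + 1} =
       [n - 1, n - 2, 1] ! i" using S by simp
next
  fix x y i assume V: "x \<in> crown_vertices n" "y \<in> crown_vertices n"
    and i: "1 \<le> i \<and> i \<le> length [1, n - 2, n - 1]" and g: "gdist (crown_vertices n) crown_adj x y = i"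
  obtain a s where x: "x = (a,s)" by (cases x)
  obtain b where b: "b = fst y" by simp
  have ab: "a < n" "b < n" using V x b by (auto simp: mem_V)
  have S: "{z \<in> crown_vertices n. crown_adj y z \<and> gdist (crown_vertices n) crown_adj x z = i - 1}
     = {z \<in> crown_vertices n. crown_adj y z \<and> dd x z = i - 1}"
    using gdist_eq[OF n3 V(1)] by auto
  have d: "dd (a,s) y = i" using g gdist_eq[OF n3 V] x by simp
  have "1 \<le> i" using i by simp
  then have "card {z \<in> crown_vertices n. crown_adj y z \<and> dd x z = i - 1} = [1, n - 2, n - 1] ! (i - 1)"
    using dd_cases[OF d]
  proof (elim disjE conjE)
    assume "i = 1" "fst y \<noteq> a" "y = (fst y, \<not> s)"
    then show ?thesis using x c1[of a b n s] ab b by (simp add: numeral_2_eq_2)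
  next
    assume "i = 2" "fst y \<noteq> a" "y = (fst y, s)"
    then show ?thesis using x c2[of a b n s] card_side[of "{a,b}" n "\<not> s"] ab b by (simp add: numeral_2_eq_2)
  next
    assume "i = 3" "y = (a, \<not> s)"
    then show ?thesis using x c3[of n a s] card_side[of "{a}" n s] ab by (simp add: numeral_2_eq_2)
  qed auto
  then show "card {z \<in> crown_vertices n. crown_adj y z \<and> gdist (crown_vertices n) crown_adj x z = i - 1} =
       [1, n - 2, n - 1] ! (i - 1)" using S by simp
qed


lemma mand_wit:
  assumes "(colp (a,s) (b,t), i, j) \<in> {(ColA,ColA,ColA),(ColA,ColB,ColB),(ColB,ColA,ColB),(ColB,ColB,ColA),
    (ColA,ColB,ColC),(ColA,ColC,ColB),(ColB,ColA,ColC),(ColB,ColC,ColA),(ColC,ColA,ColB),(ColC,ColB,ColA)}"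
    "(a,s) \<noteq> (b,t)" "k \<noteq> a" "k \<noteq> b"
  shows "\<exists>z\<in>{(k,True),(k,False),(a,True),(a,False),(b,True),(b,False)}.
     z \<noteq> (a,s) \<and> z \<noteq> (b,t) \<and> colp (a,s) z = i \<and> colp z (b,t) = j"
  using assms by (cases s; cases t; cases "a = b") (auto simp: colp_def)

lemma part_rep:
  assumes n3: "3 \<le> n"
  shows "representation_26_65 (crown_vertices n) (crown_coloring n)"
  unfolding representation_26_65_def
proof (intro conjI allI ballI impI)
  fix x y assume "x \<in> crown_vertices n" "y \<in> crown_vertices n" "x \<noteq> y"
  then show "crown_coloring n x y = crown_coloring n y x"
    using col_eq[OF n3] by (auto simp: colp_def)
next
  fix h
  have V: "(0,True) \<in> crown_vertices n" "(0,False) \<in> crown_vertices n"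
     "(1,True) \<in> crown_vertices n" "(1,False) \<in> crown_vertices n" using n3 by (auto simp: mem_V)
  show "\<exists>x\<in>crown_vertices n. \<exists>y\<in>crown_vertices n. x \<noteq> y \<and> crown_coloring n x y = h"
  proof (cases h)
    case ColA then show ?thesis using V col_eq[OF n3, of "(0,True)" "(1,True)"]
      by (intro bexI[of _ "(0,True)"] bexI[of _ "(1,True)"]) (auto simp: colp_def)
  next
    case ColB then show ?thesis using V col_eq[OF n3, of "(0,True)" "(1,False)"]
      by (intro bexI[of _ "(0,True)"] bexI[of _ "(1,False)"]) (auto simp: colp_def)
  next
    case ColC then show ?thesis using V col_eq[OF n3, of "(0,True)" "(0,False)"]
      by (intro bexI[of _ "(0,True)"] bexI[of _ "(0,False)"]) (auto simp: colp_def)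
  qed
next
  fix T x y i j
  assume T: "T \<in> mandatory_26_65" and V: "x \<in> crown_vertices n" "y \<in> crown_vertices n"
    and h: "x \<noteq> y \<and> {#crown_coloring n x y, i, j#} = T"
  obtain a s where x: "x = (a,s)" by (cases x)
  obtain b t where y: "y = (b,t)" by (cases y)
  obtain k where k: "k < n" "k \<noteq> a" "k \<noteq> b" using third[OF n3] by blast
  have ab: "a < n" "b < n" using V x y by (auto simp: mem_V)
  have "{#colp x y, i, j#} \<in> mandatory_26_65" using T h col_eq[OF n3 V] by simp
  then have m: "(colp (a,s) (b,t), i, j) \<in> {(ColA,ColA,ColA),(ColA,ColB,ColB),(ColB,ColA,ColB),(ColB,ColB,ColA),
    (ColA,ColB,ColC),(ColA,ColC,ColB),(ColB,ColA,ColC),(ColB,ColC,ColA),(ColC,ColA,ColB),(ColC,ColB,ColA)}"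
    unfolding mand_iff x y .
  obtain z where z: "z\<in>{(k,True),(k,False),(a,True),(a,False),(b,True),(b,False)}"
     "z \<noteq> (a,s)" "z \<noteq> (b,t)" "colp (a,s) z = i" "colp z (b,t) = j"
    using mand_wit[OF m _ k(2,3)] h x y by blast
  have zV: "z \<in> crown_vertices n" using z(1) k ab by (auto simp: mem_V)
  show "\<exists>z\<in>crown_vertices n. z \<noteq> x \<and> z \<noteq> y \<and> crown_coloring n x z = i \<and> crown_coloring n z y = j"
    using zV z x y col_eq[OF n3 V(1) zV] col_eq[OF n3 zV V(2)] by auto
next
  fix x y z assume V: "x \<in> crown_vertices n" "y \<in> crown_vertices n" "z \<in> crown_vertices n"
    and d: "x \<noteq> y \<and> y \<noteq> z \<and> x \<noteq> z"
  have "{#colp x y, colp y z, colp x z#} \<in> mandatory_26_65"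
    unfolding mand_iff using d by (auto simp: colp_def prod_eq_iff)
  then show "{#crown_coloring n x y, crown_coloring n y z, crown_coloring n x z#} \<in> mandatory_26_65"
    using d col_eq[OF n3] V by simp
qed


lemma part_alg:
  assumes n3: "3 \<le> n"
  shows "algebraic_representation (crown_vertices n) (crown_coloring n)"
  unfolding algebraic_representation_def
proof (intro conjI ballI)
  show "finite (crown_vertices n)" by (simp add: crown_vertices_def)
next
  let ?V = "crown_vertices n"
  let ?G = "color_preserving_perms ?V (crown_coloring n)"
  have Gb: "\<And>f. f \<in> ?G \<Longrightarrow> bij_betw f ?V ?V" by (simp add: color_preserving_perms_def)
  fix R assume R: "R \<in> {Id_on ?V} \<union> range (color_class ?V (crown_coloring n))"
  show "\<exists>p\<in>R. R = pair_orbit ?G p"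
  proof (cases "R = Id_on ?V")
    case True
    have x0: "(0,True) \<in> ?V" using n3 by (simp add: mem_V)
    have "Id_on ?V = pair_orbit ?G ((0,True),(0,True))"
    proof
      show "Id_on ?V \<subseteq> pair_orbit ?G ((0,True),(0,True))"
      proof
        fix q assume "q \<in> Id_on ?V"
        then obtain u where u: "u \<in> ?V" "q = (u,u)" by auto
        obtain \<sigma> t where "bij_betw \<sigma> {0..<n} {0..<n}" "fm \<sigma> t (0,True) = u"
          using transit[OF x0 x0 u(1) u(1)] by auto
        then show "q \<in> pair_orbit ?G ((0,True),(0,True))"
          unfolding pair_orbit_def using u fm_cpp[OF n3] by fastforce
      qed
    next
      show "pair_orbit ?G ((0,True),(0,True)) \<subseteq> Id_on ?V"
        unfolding pair_orbit_def using Gb x0 bij_betwE by fastforce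
    qed
    then show ?thesis using True x0 by auto
  next
    case False
    then obtain h where R: "R = color_class ?V (crown_coloring n) h" using R by auto
    obtain x0 y0 where p: "x0 \<in> ?V" "y0 \<in> ?V" "x0 \<noteq> y0" "crown_coloring n x0 y0 = h"
      using part_rep[OF n3] unfolding representation_26_65_def by meson
    have "R = pair_orbit ?G (x0,y0)"
    proof
      show "R \<subseteq> pair_orbit ?G (x0,y0)"
      proof
        fix q assume "q \<in> R"
        then obtain u v where uv: "q = (u,v)" "u \<in> ?V" "v \<in> ?V" "u \<noteq> v" "crown_coloring n u v = h"
          using R by (auto simp: color_class_def)
        have "colp x0 y0 = colp u v" using uv p col_eq[OF n3] by simp
        from colp_pat[OF p(3) uv(4) this] obtain \<sigma> t where
          "bij_betw \<sigma> {0..<n} {0..<n}" "fm \<sigma> t x0 = u" "fm \<sigma> t y0 = v"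
          using transit[OF p(1,2) uv(2,3)] by blast
        then show "q \<in> pair_orbit ?G (x0,y0)"
          unfolding pair_orbit_def using uv fm_cpp[OF n3] by fastforce
      qed
    next
      show "pair_orbit ?G (x0,y0) \<subseteq> R"
      proof
        fix q assume "q \<in> pair_orbit ?G (x0,y0)"
        then obtain f where f: "f \<in> ?G" "q = (f x0, f y0)" by (auto simp: pair_orbit_def)
        have b: "bij_betw f ?V ?V" using Gb f(1) .
        have "f x0 \<in> ?V" "f y0 \<in> ?V" using b p bij_betwE by blast+
        moreover have "f x0 \<noteq> f y0" using b p by (metis bij_betw_iff_bijections)
        moreover have "crown_coloring n (f x0) (f y0) = h"
          using f(1) p by (simp add: color_preserving_perms_def)
        ultimately show "q \<in> R" using R f(2) by (simp add: color_class_def)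
      qed
    qed
    then show ?thesis using R p by (auto simp: color_class_def)
  qed
qed

theorem mainTheorem8:
  fixes n :: nat
  assumes "n \<ge> 3"
  shows "distance_transitive (crown_vertices n) crown_adj
       \<and> has_diameter (crown_vertices n) crown_adj 3
       \<and> has_intersection_array (crown_vertices n) crown_adj [n - 1, n - 2, 1] [1, n - 2, n - 1]
       \<and> card (crown_vertices n) = 2 * n
       \<and> representation_26_65 (crown_vertices n) (crown_coloring n)
       \<and> algebraic_representation (crown_vertices n) (crown_coloring n)"
  using part_dt[OF assms] part_diam[OF assms] part_ia[OF assms] part_rep[OF assms] part_alg[OF assms]
  by (simp add: crown_vertices_def card_cartesian_product)

end
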